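(* Let $A=\begin{bmatrix}0&B\\0&C\end{bmatrix}$ act on $\mathbb{C}^m\oplus\mathbb{C}^d$, with $B\in M_{m\times d}$, $C\in M_d$ and $B^*B+C^*C=I_d$, and let $D=I_d-C^*C$. Define $P_C(x,y)=\det(I-xC-yC^* )$ and $Q_C(x,y)=\det(I-xC-yC^*-xyD)$. Then for every $z\in\mathbb{C}\setminus\{0\}$ and $\theta\in\mathbb{R}$, $$\det(zI-e^{-i\theta}A-e^{i\theta}A^* )=z^{m+d}Q_C\!\left(\tfrac{e^{-i\theta}}{z},\tfrac{e^{i\theta}}{z}\right),\qquad \det(zI-e^{-i\theta}C-e^{i\theta}C^* )=z^{d}P_C\!\left(\tfrac{e^{-i\theta}}{z},\tfrac{e^{i\theta}}{z}\right).$$ Consequently: (i) $A$ has the Circularity property if and only if $Q_C(x,y)\in\mathbb{C}[xy]$ (i.e. $Q_C$ is a polynomial in the product $xy$ alone); (ii) $C$ has the Circularity property if and only if $P_C(x,y)\in\mathbb{C}[xy]$.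
   Context: For $X\in M_n(\mathbb{C})$, $H_X(\theta)=\frac12(e^{-i\theta}X+e^{i\theta}X^* )$; $X$ has the Circularity property if the spectrum of $H_X(\theta)$ is independent of $\theta\in\mathbb{R}$. *)

theory Defs
  imports Complex_Main "Jordan_Normal_Form.Spectral_Radius" "Jordan_Normal_Form.Schur_Decomposition"
begin

definition H_mat :: "complex mat \<Rightarrow> real \<Rightarrow> complex mat" where
  "H_mat X \<theta> = (1/2 :: complex) \<cdot>\<^sub>m (cis (-\<theta>) \<cdot>\<^sub>m X + cis \<theta> \<cdot>\<^sub>m mat_adjoint X)"

definition circularity :: "complex mat \<Rightarrow> bool" where
  "circularity X \<longleftrightarrow> (\<forall>\<theta>1 \<theta>2. spectrum (H_mat X \<theta>1) = spectrum (H_mat X \<theta>2))"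

definition P_C :: "complex mat \<Rightarrow> complex \<Rightarrow> complex \<Rightarrow> complex" where
  "P_C C x y = det (1\<^sub>m (dim_row C) - x \<cdot>\<^sub>m C - y \<cdot>\<^sub>m mat_adjoint C)"

definition D_C :: "complex mat \<Rightarrow> complex mat" where
  "D_C C = 1\<^sub>m (dim_row C) - mat_adjoint C * C"

definition Q_C :: "complex mat \<Rightarrow> complex \<Rightarrow> complex \<Rightarrow> complex" where
  "Q_C C x y = det (1\<^sub>m (dim_row C) - x \<cdot>\<^sub>m C - y \<cdot>\<^sub>m mat_adjoint C - (x * y) \<cdot>\<^sub>m D_C C)"

definition in_poly_xy :: "(complex \<Rightarrow> complex \<Rightarrow> complex) \<Rightarrow> bool" where
  "in_poly_xy f \<longleftrightarrow> (\<exists>q :: complex poly. \<forall>x y. f x y = poly q (x * y))"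

end

theory Submission
  imports Defs
begin


lemma adj_carrier: "A \<in> carrier_mat n m \<Longrightarrow> mat_adjoint A \<in> carrier_mat m n"
  unfolding mat_adjoint_def by (auto simp: mat_of_rows_def)

lemma adj_index: "A \<in> carrier_mat n m \<Longrightarrow> i < m \<Longrightarrow> j < n \<Longrightarrow>
   mat_adjoint A $$ (i,j) = cnj (A $$ (j,i))"
  unfolding mat_adjoint_def by (auto simp: mat_of_rows_def)

lemma det_cont:
  fixes M :: "'a::topological_space \<Rightarrow> complex mat"
  assumes "\<And>t. M t \<in> carrier_mat n n"
   and "\<And>i j. i < n \<Longrightarrow> j < n \<Longrightarrow> continuous_on UNIV (\<lambda>t. M t $$ (i,j))"
  shows "continuous_on UNIV (\<lambda>t. det (M t))"
proof -
  have eq: "\<And>t. det (M t) = (\<Sum> p \<in> {p. p permutes {0 ..< n}}. 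
     signof p * (\<Prod> i = 0 ..< n. M t $$ (i, p i)))" using det_def'[OF assms(1)] by auto
  show ?thesis unfolding eq
    apply (intro continuous_intros)
    using assms(2) permutes_in_image by fastforce
qed

lemma real_const:
  fixes g :: "real \<Rightarrow> real"
  assumes c: "continuous_on UNIV g" and f: "finite (range g)"
  shows "g a = g b"
proof (rule ccontr)
  assume ne: "g a \<noteq> g b"
  have sub: "{min (g a) (g b) .. max (g a) (g b)} \<subseteq> range g"
  proof
    fix y assume y: "y \<in> {min (g a) (g b) .. max (g a) (g b)}"
    have cc: "continuous_on {x..z} g" for x z using c continuous_on_subset by blast
    show "y \<in> range g"
    proof (cases "a \<le> b")
      case True
      then show ?thesis using y IVT'[of g a y b] IVT2'[of g b y a] cc
        by (cases "g a \<le> g b") (auto simp: min_def max_def split: if_splits)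
    next
      case False
      then show ?thesis using y IVT'[of g b y a] IVT2'[of g a y b] cc
        by (cases "g a \<le> g b") (auto simp: min_def max_def split: if_splits)
    qed
  qed
  have "min (g a) (g b) < max (g a) (g b)" using ne by (auto simp: min_def max_def)
  then show False using sub f infinite_Icc finite_subset by blast
qed

lemma complex_const:
  fixes f :: "real \<Rightarrow> complex"
  assumes c: "continuous_on UNIV f" and fin: "finite (range f)"
  shows "f a = f b"
proof -
  have "Re (f a) = Re (f b)"
    by (rule real_const[of "\<lambda>t. Re (f t)"], intro continuous_intros c,
        metis (no_types) fin finite_imageI image_image)
  moreover have "Im (f a) = Im (f b)"
    by (rule real_const[of "\<lambda>t. Im (f t)"], intro continuous_intros c,
        metis (no_types) fin finite_imageI image_image)
  ultimately show ?thesis by (simp add: complex_eq_iff)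
qed

lemma poly_eq_nz:
  fixes p q :: "complex poly"
  assumes "\<And>w. w \<noteq> 0 \<Longrightarrow> poly p w = poly q w"
  shows "p = q"
proof (rule ccontr)
  assume "p \<noteq> q"
  then have "p - q \<noteq> 0" by simp
  from poly_roots_finite[OF this] have "finite {x. poly (p - q) x = 0}" .
  moreover have "UNIV - {0} \<subseteq> {x. poly (p - q) x = 0}" using assms by auto
  ultimately have "finite (UNIV - {0::complex})" using finite_subset by blast
  then have "finite (insert 0 (UNIV - {0::complex}))" by simp
  moreover have "insert 0 (UNIV - {0::complex}) = UNIV" by auto
  ultimately show False using infinite_UNIV_char_0 by metis
qed



lemma alg_q:
  fixes C C2 D :: "complex mat"
  assumes C: "C \<in> carrier_mat k k" and C2: "C2 \<in> carrier_mat k k" and D: "D \<in> carrier_mat k k"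
  shows "\<exists>q. \<forall>p. poly q p = det (1\<^sub>m k - 1 \<cdot>\<^sub>m C - p \<cdot>\<^sub>m C2 - (1*p) \<cdot>\<^sub>m D)"
proof -
  let ?B = "mat k k (\<lambda>(i,j). [: (1\<^sub>m k - C)$$(i,j), -(C2 + D)$$(i,j) :])"
  have "poly (det ?B) p = det (1\<^sub>m k - 1 \<cdot>\<^sub>m C - p \<cdot>\<^sub>m C2 - (1*p) \<cdot>\<^sub>m D)" for p
    by (rule poly_det_cong[of _ k], insert C C2 D, auto simp: algebra_simps)
  then show ?thesis by blast
qed

lemma alg_g:
  fixes C C2 D :: "complex mat"
  assumes C: "C \<in> carrier_mat k k" and C2: "C2 \<in> carrier_mat k k" and D: "D \<in> carrier_mat k k"
  shows "\<exists>g. \<forall>w. w \<noteq> 0 \<longrightarrow> poly g w = w ^ k * det (1\<^sub>m k - w \<cdot>\<^sub>m C - (p / w) \<cdot>\<^sub>m C2 - (w * (p / w)) \<cdot>\<^sub>m D)"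
proof -
  let ?B = "mat k k (\<lambda>(i,j). [: -p * C2$$(i,j), (1\<^sub>m k)$$(i,j) - p * D$$(i,j), - C$$(i,j) :])"
  have "poly (det ?B) w = w ^ k * det (1\<^sub>m k - w \<cdot>\<^sub>m C - (p / w) \<cdot>\<^sub>m C2 - (w * (p / w)) \<cdot>\<^sub>m D)"
    if w: "w \<noteq> 0" for w
  proof -
    have "poly (det ?B) w = det (w \<cdot>\<^sub>m (1\<^sub>m k - w \<cdot>\<^sub>m C - (p / w) \<cdot>\<^sub>m C2 - (w * (p / w)) \<cdot>\<^sub>m D))"
      by (rule poly_det_cong[of _ k], insert C C2 D w, auto simp: algebra_simps power2_eq_square)
    also have "\<dots> = w ^ k * det (1\<^sub>m k - w \<cdot>\<^sub>m C - (p / w) \<cdot>\<^sub>m C2 - (w * (p / w)) \<cdot>\<^sub>m D)"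
      using C D by simp
    finally show ?thesis .
  qed
  then show ?thesis by blast
qed



lemma cis_inj: "inj_on (\<lambda>\<theta>. cis (-\<theta>) * t) {0..pi}" if "t \<noteq> (0::complex)"
proof (rule inj_onI)
  fix a b assume a: "a \<in> {0..pi}" and b: "b \<in> {0..pi}" and e: "cis (-a) * t = cis (-b) * t"
  then have "cis (-a) = cis (-b)" using that by simp
  then have "Re (cis (-a)) = Re (cis (-b))" by simp
  then have "cos a = cos b" by simp
  then show "a = b" using a b cos_inj_pi by auto
qed

lemma alg_main:
  fixes C C2 D :: "complex mat" and R :: "complex \<Rightarrow> complex \<Rightarrow> complex"
  assumes C: "C \<in> carrier_mat k k" and C2: "C2 \<in> carrier_mat k k" and D: "D \<in> carrier_mat k k"
  and Rdef: "\<And>x y. R x y = det (1\<^sub>m k - x \<cdot>\<^sub>m C - y \<cdot>\<^sub>m C2 - (x*y) \<cdot>\<^sub>m D)"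
  and inv: "\<And>t \<theta>. t \<noteq> 0 \<Longrightarrow> R (cis (-\<theta>) * t) (cis \<theta> * t) = R t t"
  shows "in_poly_xy R"
proof -
  obtain q where q: "\<And>p. poly q p = R 1 p" using alg_q[OF C C2 D] Rdef by auto
  have stepA: "R x y = poly q (x * y)" if x: "x \<noteq> 0" and y: "y \<noteq> 0" for x y
  proof -
    define p where "p = x * y"
    define t where "t = csqrt p"
    have tt: "t * t = p" unfolding t_def by (simp add: power2_eq_square[symmetric])
    have t0: "t \<noteq> 0" using x y tt p_def by auto
    obtain g where g: "\<And>w. w \<noteq> 0 \<Longrightarrow> poly g w = w ^ k * R w (p / w)"
      using alg_g[OF C C2 D, of p] Rdef by auto
    define h where "h = g - Polynomial.smult (R t t) (monom 1 k)"
    have root: "poly h (cis (-\<theta>) * t) = 0" for \<theta>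
    proof -
      let ?w = "cis (-\<theta>) * t"
      have w0: "?w \<noteq> 0" using t0 by simp
      have "p / ?w = cis \<theta> * t" using t0 tt
        by (simp add: field_simps cis_mult flip: cis_divide)
      then have "poly g ?w = ?w ^ k * R t t" using g[OF w0] inv[OF t0] by simp
      then show ?thesis unfolding h_def by (simp add: poly_monom)
    qed
    have "h = 0"
    proof (rule ccontr)
      assume "h \<noteq> 0"
      from poly_roots_finite[OF this] have fin: "finite {x. poly h x = 0}" .
      have "(\<lambda>\<theta>. cis (-\<theta>) * t) ` {0..pi} \<subseteq> {x. poly h x = 0}" using root by auto
      then have "finite ((\<lambda>\<theta>. cis (-\<theta>) * t) ` {0..pi})" using fin finite_subset by blast
      then have "finite {0..pi}" using finite_imageD cis_inj[OF t0] by blast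
      then show False using pi_gt_zero infinite_Icc by blast
    qed
    then have gw: "\<And>w. poly g w = R t t * w ^ k" unfolding h_def
      by (metis eq_iff_diff_eq_0 poly_monom poly_smult mult_1)
    have const: "R w (p / w) = R t t" if "w \<noteq> 0" for w
      using g[OF that] gw[of w] that by simp
    have "R x y = R x (p / x)" using x p_def by simp
    also have "\<dots> = R 1 (p / 1)" using const[OF x] const[of 1] by simp
    finally show ?thesis using q p_def by simp
  qed
  show ?thesis unfolding in_poly_xy_def
  proof (intro exI allI)
    fix x y :: complex
    let ?F = "\<lambda>e. R (x + e) (y + e)"
    let ?G = "\<lambda>e. poly q ((x + e) * (y + e))"
    have contF: "continuous_on UNIV ?F" unfolding Rdef
      by (rule det_cont[of _ k], insert C C2 D, auto intro!: continuous_intros)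
    have contG: "continuous_on UNIV ?G" by (intro continuous_intros)
    have "(?F \<longlongrightarrow> ?F 0) (at 0)" using contF by (simp add: continuous_on_def) (metis add_0_right)
    moreover have "(?G \<longlongrightarrow> ?G 0) (at 0)" using contG by (simp add: continuous_on_def) (metis add_0_right)
    moreover have "eventually (\<lambda>e. ?G e = ?F e) (at 0)"
    proof -
      have nz: "eventually (\<lambda>e. a + e \<noteq> 0) (at (0::complex))" for a :: complex
      proof (cases "a = 0")
        case True
        then show ?thesis by (simp add: eventually_at_filter)
      next
        case False
        have "((\<lambda>e. a + e) \<longlongrightarrow> a + 0) (at (0::complex))" by (intro tendsto_intros)
        then show ?thesis using False tendsto_imp_eventually_ne by fastforce
      qed
      show ?thesis using eventually_conj[OF nz[of x] nz[of y]]
        by (rule eventually_mono) (simp add: stepA)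
    qed
    ultimately have "(?F \<longlongrightarrow> ?G 0) (at 0)" by (metis tendsto_cong)
    then show "R x y = poly q (x * y)" 
      using tendsto_unique[OF at_neq_bot] \<open>(?F \<longlongrightarrow> ?F 0) (at 0)\<close> by fastforce
  qed
qed



lemma H_carrier: "X \<in> carrier_mat N N \<Longrightarrow> H_mat X \<theta> \<in> carrier_mat N N"
  unfolding H_mat_def using adj_carrier[of X N N] by (intro smult_carrier_mat add_carrier_mat) auto

lemma Hchar:
  assumes X: "X \<in> carrier_mat N N"
  shows "poly (char_poly (H_mat X \<theta>)) w = (1/2)^N *
     det ((2*w) \<cdot>\<^sub>m 1\<^sub>m N - cis (-\<theta>) \<cdot>\<^sub>m X - cis \<theta> \<cdot>\<^sub>m mat_adjoint X)"
proof -
  have H: "H_mat X \<theta> \<in> carrier_mat N N" using H_carrier[OF X] .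
  have XA: "mat_adjoint X \<in> carrier_mat N N" using adj_carrier[OF X] .
  have "- char_matrix (H_mat X \<theta>) w = (1/2) \<cdot>\<^sub>m ((2*w) \<cdot>\<^sub>m 1\<^sub>m N - cis (-\<theta>) \<cdot>\<^sub>m X - cis \<theta> \<cdot>\<^sub>m mat_adjoint X)"
    by (rule eq_matI, insert H X XA, auto simp: char_matrix_def H_mat_def adj_index right_diff_distrib add_divide_distrib)
  then show ?thesis using char_poly_matrix[OF H] X XA by simp
qed

lemma circ_main:
  fixes X C C2 D :: "complex mat" and R :: "complex \<Rightarrow> complex \<Rightarrow> complex"
  assumes X: "X \<in> carrier_mat N N"
  and C: "C \<in> carrier_mat k k" and C2: "C2 \<in> carrier_mat k k" and D: "D \<in> carrier_mat k k"
  and Rdef: "\<And>x y. R x y = det (1\<^sub>m k - x \<cdot>\<^sub>m C - y \<cdot>\<^sub>m C2 - (x*y) \<cdot>\<^sub>m D)"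
  and id: "\<And>z \<theta>. z \<noteq> 0 \<Longrightarrow> det (z \<cdot>\<^sub>m 1\<^sub>m N - cis (-\<theta>) \<cdot>\<^sub>m X - cis \<theta> \<cdot>\<^sub>m mat_adjoint X)
          = z ^ N * R (cis (-\<theta>) / z) (cis \<theta> / z)"
  shows "circularity X \<longleftrightarrow> in_poly_xy R"
proof
  let ?M = "\<lambda>\<theta> z. det (z \<cdot>\<^sub>m 1\<^sub>m N - cis (-\<theta>) \<cdot>\<^sub>m X - cis \<theta> \<cdot>\<^sub>m mat_adjoint X)"
  let ?cp = "\<lambda>\<theta>. char_poly (H_mat X \<theta>)"
  have XA: "mat_adjoint X \<in> carrier_mat N N" using adj_carrier[OF X] .
  assume circ: "circularity X"
  define S where "S = spectrum (H_mat X 0)"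
  have spec: "spectrum (H_mat X \<theta>) = S" for \<theta> using circ unfolding circularity_def S_def by blast
  have cp0: "?cp 0 \<noteq> 0" using degree_monic_char_poly[OF H_carrier[OF X], of 0] by (metis coeff_0 zero_neq_one)
  have finS: "finite S" unfolding S_def spectrum_root_char_poly[OF H_carrier[OF X]]
    by (rule poly_roots_finite[OF cp0])
  define F where "F = (\<lambda>as. \<Prod>a\<leftarrow>as. [:- a, 1:]) ` {as. set as \<subseteq> S \<and> length as = N}"
  have finF: "finite F" unfolding F_def using finite_lists_length_eq[OF finS] by simp
  have cpF: "?cp \<theta> \<in> F" for \<theta>
  proof -
    obtain as where as: "?cp \<theta> = (\<Prod>a\<leftarrow>as. [:- a, 1:])" "length as = N"
      using char_poly_factorized[OF H_carrier[OF X]] by blast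
    have "set as \<subseteq> S"
    proof
      fix a assume "a \<in> set as"
      then have "poly (?cp \<theta>) a = 0" unfolding as(1) by (induct as) auto
      then show "a \<in> S" using spec[of \<theta>] spectrum_root_char_poly[OF H_carrier[OF X]] by auto
    qed
    then show ?thesis unfolding F_def using as by auto
  qed
  have cpconst: "poly (?cp \<theta>) w = poly (?cp 0) w" for \<theta> w
  proof (rule complex_const[of "\<lambda>\<theta>. poly (?cp \<theta>) w"])
    show "continuous_on UNIV (\<lambda>\<theta>. poly (?cp \<theta>) w)" unfolding Hchar[OF X]
      by (intro continuous_intros det_cont[of _ N], insert X XA, auto intro!: continuous_intros)
    show "finite (range (\<lambda>\<theta>. poly (?cp \<theta>) w))"
    proof (rule finite_subset[OF _ finite_imageI[OF finF, of "\<lambda>p. poly p w"]])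
      show "range (\<lambda>\<theta>. poly (?cp \<theta>) w) \<subseteq> (\<lambda>p. poly p w) ` F" using cpF by auto
    qed
  qed
  have Mconst: "?M \<theta> z = ?M 0 z" for \<theta> z
    using cpconst[where \<theta>=\<theta> and w="z/2"] unfolding Hchar[OF X] by simp
  show "in_poly_xy R"
  proof (rule alg_main[OF C C2 D Rdef])
    fix t :: complex and \<theta> :: real assume t: "t \<noteq> 0"
    have z: "1/t \<noteq> 0" using t by simp
    have "(1/t) ^ N * R (cis (-\<theta>) * t) (cis \<theta> * t) = (1/t) ^ N * R t t"
      using id[OF z, of \<theta>] id[OF z, of 0] Mconst[where \<theta>=\<theta> and z="1/t"] by simp
    then show "R (cis (-\<theta>) * t) (cis \<theta> * t) = R t t" using t by simp
  qed
next
  assume "in_poly_xy R"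
  then obtain q where q: "\<And>x y. R x y = poly q (x * y)" unfolding in_poly_xy_def by blast
  show "circularity X" unfolding circularity_def
  proof (intro allI)
    fix a b :: real
    have "char_poly (H_mat X a) = char_poly (H_mat X b)"
    proof (rule poly_eq_nz)
      fix w :: complex assume w: "w \<noteq> 0"
      then have w2: "2 * w \<noteq> 0" by simp
      have cc: "cis (-t) / (2*w) * (cis t / (2*w)) = 1 / (2*w)^2" for t
        by (simp add: field_simps power2_eq_square cis_mult)
      show "poly (char_poly (H_mat X a)) w = poly (char_poly (H_mat X b)) w"
        unfolding Hchar[OF X] id[OF w2] q cc ..
    qed
    then show "spectrum (H_mat X a) = spectrum (H_mat X b)"
      using spectrum_root_char_poly[OF H_carrier[OF X]] by metis
  qed
qed



lemma schur_id:
  fixes B C :: "complex mat" and a b z :: complex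
  assumes B: "B \<in> carrier_mat m d" and C: "C \<in> carrier_mat d d"
    and BC: "mat_adjoint B * B + mat_adjoint C * C = 1\<^sub>m d"
    and A: "A = four_block_mat (0\<^sub>m m m) B (0\<^sub>m d m) C"
    and z: "z \<noteq> 0"
  shows "det (z \<cdot>\<^sub>m 1\<^sub>m (m + d) - a \<cdot>\<^sub>m A - b \<cdot>\<^sub>m mat_adjoint A)
     = z ^ (m + d) * det (1\<^sub>m d - (a/z) \<cdot>\<^sub>m C - (b/z) \<cdot>\<^sub>m mat_adjoint C - ((a/z)*(b/z)) \<cdot>\<^sub>m D_C C)"
proof -
  have Ac: "A \<in> carrier_mat (m+d) (m+d)" unfolding A using B C by auto
  have BA: "mat_adjoint B \<in> carrier_mat d m" using adj_carrier[OF B] .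
  have CA: "mat_adjoint C \<in> carrier_mat d d" using adj_carrier[OF C] .
  have AA: "mat_adjoint A \<in> carrier_mat (m+d) (m+d)" using adj_carrier[OF Ac] .
  have DC: "D_C C \<in> carrier_mat d d" unfolding D_C_def using C CA by auto
  have BB: "mat_adjoint B * B = D_C C"
  proof (rule eq_matI)
    fix i j assume i: "i < dim_row (D_C C)" and j: "j < dim_col (D_C C)"
    have "(mat_adjoint B * B + mat_adjoint C * C) $$ (i,j) = 1\<^sub>m d $$ (i,j)" using BC by simp
    then show "(mat_adjoint B * B) $$ (i,j) = D_C C $$ (i,j)"
      using i j B C BA CA DC unfolding D_C_def by (auto simp: algebra_simps)
  qed (insert B BA DC, auto)
  define W where "W = z \<cdot>\<^sub>m 1\<^sub>m d - a \<cdot>\<^sub>m C - b \<cdot>\<^sub>m mat_adjoint C"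
  have W: "W \<in> carrier_mat d d" unfolding W_def using C CA by auto
  define M where "M = four_block_mat (z \<cdot>\<^sub>m 1\<^sub>m m) ((-a) \<cdot>\<^sub>m B) ((-b) \<cdot>\<^sub>m mat_adjoint B) W"
  have Mc: "M \<in> carrier_mat (m+d) (m+d)" unfolding M_def using B BA W by auto
  have ME: "z \<cdot>\<^sub>m 1\<^sub>m (m + d) - a \<cdot>\<^sub>m A - b \<cdot>\<^sub>m mat_adjoint A = M"
  proof (rule eq_matI)
    fix i j assume i: "i < dim_row M" and j: "j < dim_col M"
    then have i': "i < m + d" and j': "j < m + d" using Mc by auto
    show "(z \<cdot>\<^sub>m 1\<^sub>m (m + d) - a \<cdot>\<^sub>m A - b \<cdot>\<^sub>m mat_adjoint A) $$ (i, j) = M $$ (i, j)"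
    proof -
      have e1: "(z \<cdot>\<^sub>m 1\<^sub>m (m + d) - a \<cdot>\<^sub>m A - b \<cdot>\<^sub>m mat_adjoint A) $$ (i, j)
         = z * 1\<^sub>m (m + d) $$ (i, j) - a * A $$ (i,j) - b * cnj (A $$ (j,i))"
        using i' j' Ac AA by (simp add: adj_index[OF Ac i' j'])
      show ?thesis unfolding e1
        using i' j' B C BA CA W unfolding M_def W_def
        by (simp add: adj_index[OF B] adj_index[OF C] A index_mat_four_block) arith
    qed
  qed (insert Mc Ac AA, auto)
  define L where "L = four_block_mat (1\<^sub>m m) (0\<^sub>m m d) ((b/z) \<cdot>\<^sub>m mat_adjoint B) (1\<^sub>m d)"
  have Lc: "L \<in> carrier_mat (m+d) (m+d)" unfolding L_def using BA by auto
  have detL: "det L = 1" unfolding L_def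
    by (subst det_four_block_mat_upper_right_zero[of _ m _ d], insert BA, auto)
  define K where "K = (b/z) \<cdot>\<^sub>m mat_adjoint B * ((-a) \<cdot>\<^sub>m B) + 1\<^sub>m d * W"
  have LM: "L * M = four_block_mat (z \<cdot>\<^sub>m 1\<^sub>m m) ((-a) \<cdot>\<^sub>m B) (0\<^sub>m d m) K"
  proof -
    have "L * M = four_block_mat (1\<^sub>m m * (z \<cdot>\<^sub>m 1\<^sub>m m) + 0\<^sub>m m d * ((-b) \<cdot>\<^sub>m mat_adjoint B))
       (1\<^sub>m m * ((-a) \<cdot>\<^sub>m B) + 0\<^sub>m m d * W)
       ((b/z) \<cdot>\<^sub>m mat_adjoint B * (z \<cdot>\<^sub>m 1\<^sub>m m) + 1\<^sub>m d * ((-b) \<cdot>\<^sub>m mat_adjoint B))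
       ((b/z) \<cdot>\<^sub>m mat_adjoint B * ((-a) \<cdot>\<^sub>m B) + 1\<^sub>m d * W)"
      unfolding L_def M_def by (rule mult_four_block_mat, insert B BA W, auto)
    also have "1\<^sub>m m * (z \<cdot>\<^sub>m 1\<^sub>m m) + 0\<^sub>m m d * ((-b) \<cdot>\<^sub>m mat_adjoint B) = z \<cdot>\<^sub>m 1\<^sub>m m"
      using BA by simp
    also have "1\<^sub>m m * ((-a) \<cdot>\<^sub>m B) + 0\<^sub>m m d * W = (-a) \<cdot>\<^sub>m B" using B W by simp
    also have "(b/z) \<cdot>\<^sub>m mat_adjoint B * (z \<cdot>\<^sub>m 1\<^sub>m m) + 1\<^sub>m d * ((-b) \<cdot>\<^sub>m mat_adjoint B) = 0\<^sub>m d m"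
    proof -
      have "(b/z) \<cdot>\<^sub>m mat_adjoint B * (z \<cdot>\<^sub>m 1\<^sub>m m) = z \<cdot>\<^sub>m ((b/z) \<cdot>\<^sub>m mat_adjoint B)"
        using mult_smult_distrib[of "(b/z) \<cdot>\<^sub>m mat_adjoint B" d m "1\<^sub>m m" m z] BA by simp
      then show ?thesis by (intro eq_matI, insert BA z, auto)
    qed
    finally show ?thesis unfolding K_def .
  qed
  have KE: "K = z \<cdot>\<^sub>m (1\<^sub>m d - (a/z) \<cdot>\<^sub>m C - (b/z) \<cdot>\<^sub>m mat_adjoint C - ((a/z)*(b/z)) \<cdot>\<^sub>m D_C C)"
  proof -
    have "(b/z) \<cdot>\<^sub>m mat_adjoint B * ((-a) \<cdot>\<^sub>m B) = (-a) \<cdot>\<^sub>m ((b/z) \<cdot>\<^sub>m (mat_adjoint B * B))"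
      using mult_smult_distrib[of "(b/z) \<cdot>\<^sub>m mat_adjoint B" d m B d "-a"]
        mult_smult_assoc_mat[of "mat_adjoint B" d m B d "b/z"] BA B by simp
    then have "K = (-a) \<cdot>\<^sub>m ((b/z) \<cdot>\<^sub>m D_C C) + W" unfolding K_def BB using W by simp
    then show ?thesis
      by (intro eq_matI, insert W DC C CA z, auto simp: W_def field_simps)
  qed
  have "det M = det (L * M)" using det_mult[OF Lc Mc] detL by simp
  also have "\<dots> = det (z \<cdot>\<^sub>m 1\<^sub>m m) * det K" unfolding LM
    by (rule det_four_block_mat_lower_left_zero[of _ m _ d], insert B W, auto simp: K_def)
  also have "\<dots> = z ^ m * (z ^ d * det (1\<^sub>m d - (a/z) \<cdot>\<^sub>m C - (b/z) \<cdot>\<^sub>m mat_adjoint C - ((a/z)*(b/z)) \<cdot>\<^sub>m D_C C))"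
    unfolding KE using DC by simp
  finally show ?thesis unfolding ME by (simp add: power_add)
qed



theorem mainTheorem8:
  fixes m d :: nat and B C :: "complex mat"
  assumes "B \<in> carrier_mat m d" and "C \<in> carrier_mat d d"
    and "mat_adjoint B * B + mat_adjoint C * C = 1\<^sub>m d"
  defines "A \<equiv> four_block_mat (0\<^sub>m m m) B (0\<^sub>m d m) C"
  shows "(\<forall>z \<theta>. z \<noteq> 0 \<longrightarrow>
            det (z \<cdot>\<^sub>m 1\<^sub>m (m + d) - cis (-\<theta>) \<cdot>\<^sub>m A - cis \<theta> \<cdot>\<^sub>m mat_adjoint A)
              = z ^ (m + d) * Q_C C (cis (-\<theta>) / z) (cis \<theta> / z))
       \<and> (\<forall>z \<theta>. z \<noteq> 0 \<longrightarrow>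
            det (z \<cdot>\<^sub>m 1\<^sub>m d - cis (-\<theta>) \<cdot>\<^sub>m C - cis \<theta> \<cdot>\<^sub>m mat_adjoint C)
              = z ^ d * P_C C (cis (-\<theta>) / z) (cis \<theta> / z))
       \<and> (circularity A \<longleftrightarrow> in_poly_xy (Q_C C))
       \<and> (circularity C \<longleftrightarrow> in_poly_xy (P_C C))"
proof -
  note B = assms(1) and C = assms(2) and BC = assms(3)
  have Ac: "A \<in> carrier_mat (m+d) (m+d)" unfolding A_def using B C by auto
  have CA: "mat_adjoint C \<in> carrier_mat d d" using adj_carrier[OF C] .
  have DC: "D_C C \<in> carrier_mat d d" unfolding D_C_def using C CA by auto
  have dC: "dim_row C = d" using C by simp
  have Qdef: "\<And>x y. Q_C C x y = det (1\<^sub>m d - x \<cdot>\<^sub>m C - y \<cdot>\<^sub>m mat_adjoint C - (x*y) \<cdot>\<^sub>m D_C C)"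
    unfolding Q_C_def dC ..
  have Pdef: "\<And>x y. P_C C x y = det (1\<^sub>m d - x \<cdot>\<^sub>m C - y \<cdot>\<^sub>m mat_adjoint C - (x*y) \<cdot>\<^sub>m 0\<^sub>m d d)"
  proof -
    fix x y
    have "1\<^sub>m d - x \<cdot>\<^sub>m C - y \<cdot>\<^sub>m mat_adjoint C - (x*y) \<cdot>\<^sub>m 0\<^sub>m d d = 1\<^sub>m d - x \<cdot>\<^sub>m C - y \<cdot>\<^sub>m mat_adjoint C"
      by (rule eq_matI, insert C CA, auto)
    then show "P_C C x y = det (1\<^sub>m d - x \<cdot>\<^sub>m C - y \<cdot>\<^sub>m mat_adjoint C - (x*y) \<cdot>\<^sub>m 0\<^sub>m d d)"
      unfolding P_C_def dC by simp
  qed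
  have idQ: "\<And>z \<theta>. z \<noteq> 0 \<Longrightarrow>
            det (z \<cdot>\<^sub>m 1\<^sub>m (m + d) - cis (-\<theta>) \<cdot>\<^sub>m A - cis \<theta> \<cdot>\<^sub>m mat_adjoint A)
              = z ^ (m + d) * Q_C C (cis (-\<theta>) / z) (cis \<theta> / z)"
    unfolding Qdef by (rule schur_id[OF B C BC A_def[THEN meta_eq_to_obj_eq]])
  have idP: "\<And>z \<theta>. z \<noteq> 0 \<Longrightarrow>
            det (z \<cdot>\<^sub>m 1\<^sub>m d - cis (-\<theta>) \<cdot>\<^sub>m C - cis \<theta> \<cdot>\<^sub>m mat_adjoint C)
              = z ^ d * P_C C (cis (-\<theta>) / z) (cis \<theta> / z)"
  proof -
    fix z :: complex and \<theta> :: real assume z: "z \<noteq> 0"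
    have "z \<cdot>\<^sub>m 1\<^sub>m d - cis (-\<theta>) \<cdot>\<^sub>m C - cis \<theta> \<cdot>\<^sub>m mat_adjoint C
       = z \<cdot>\<^sub>m (1\<^sub>m d - (cis (-\<theta>) / z) \<cdot>\<^sub>m C - (cis \<theta> / z) \<cdot>\<^sub>m mat_adjoint C)"
      by (rule eq_matI, insert C CA z, auto simp: field_simps)
    then show "det (z \<cdot>\<^sub>m 1\<^sub>m d - cis (-\<theta>) \<cdot>\<^sub>m C - cis \<theta> \<cdot>\<^sub>m mat_adjoint C)
              = z ^ d * P_C C (cis (-\<theta>) / z) (cis \<theta> / z)"
      unfolding P_C_def dC using C CA by simp
  qed
  have cA: "circularity A \<longleftrightarrow> in_poly_xy (Q_C C)"
    by (rule circ_main[OF Ac C CA DC Qdef idQ])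
  have cC: "circularity C \<longleftrightarrow> in_poly_xy (P_C C)"
    by (rule circ_main[OF C C CA _ Pdef idP], simp)
  show ?thesis using idQ idP cA cC by blast
qed


end
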